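(* There is a constant $C$ such that for every function $\psi$ that is continuously differentiable on the closed half-plane $[0,\infty)\times\mathbb{R}$ with $\psi,\partial_r\psi\in L^2(\mu)$, $$\|\psi\|_{L^2(\rho_* )}\le C\big(\|\psi\|_{L^2(\mu)}+\|\partial_r\psi\|_{L^2(\mu)}\big).$$
   Context: $\mathbb{H}=\{(r,z):r>0,z\in\mathbb{R}\}$. $\rho_*(r,z)=\frac1{16\sqrt\pi}re^{-\frac{r^2+z^2}4}$; $L^2(\rho_* )$ is $L^2$ on $\mathbb{H}$ with respect to the measure $\rho_*\,dr\,dz$, and $L^2(\mu)$ is $L^2$ on $\mathbb{H}$ with respect to $d\mu=r^2\rho_*\,dr\,dz=\frac1{16\sqrt\pi}r^3e^{-\frac{r^2+z^2}4}dr\,dz$. (Equivalently, the left side is $\|r^{-1}\psi\|_{L^2(\mu)}$.) *)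

theory Defs
  imports "HOL-Analysis.Analysis"
begin

definition Hplane :: "(real \<times> real) set" where
  "Hplane = {p. fst p > 0}"

definition Hclosed :: "(real \<times> real) set" where
  "Hclosed = {p. fst p \<ge> 0}"

definition rho_star :: "real \<times> real \<Rightarrow> real" where
  "rho_star p = 1 / (16 * sqrt pi) * fst p * exp (- ((fst p)\<^sup>2 + (snd p)\<^sup>2) / 4)"

definition mu_weight :: "real \<times> real \<Rightarrow> real" where
  "mu_weight p = (fst p)\<^sup>2 * rho_star p"

definition memL2 :: "(real \<times> real \<Rightarrow> real) \<Rightarrow> (real \<times> real \<Rightarrow> real) \<Rightarrow> bool" where
  "memL2 w f \<longleftrightarrow> set_integrable lborel Hplane (\<lambda>x. (f x)\<^sup>2 * w x)"

definition L2norm :: "(real \<times> real \<Rightarrow> real) \<Rightarrow> (real \<times> real \<Rightarrow> real) \<Rightarrow> real" where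
  "L2norm w f = sqrt (\<integral>x\<in>Hplane. (f x)\<^sup>2 * w x \<partial>lborel)"

end

theory Submission
  imports Defs
begin

lemma quad_ineq:
  fixes x y r :: real
  assumes "0 \<le> r"
  shows "x\<^sup>2 * r \<le> 2 * x * y * (r\<^sup>2 * (2 - r)) + x\<^sup>2 * (4 * r - 3 * r\<^sup>2) + 8 * y\<^sup>2 * r^3 + 3 * x\<^sup>2 * r^3"
proof -
  have id: "8 * (2 * x * y * (r\<^sup>2 * (2 - r)) + x\<^sup>2 * (4 * r - 3 * r\<^sup>2) + 8 * y\<^sup>2 * r^3 + 3 * x\<^sup>2 * r^3 - x\<^sup>2 * r)
     = r * ((8 * y * r + (2 - r) * x)\<^sup>2 + (20 - 20 * r + 23 * r\<^sup>2) * x\<^sup>2)"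
    by (simp add: algebra_simps power2_eq_square power3_eq_cube)
  have p: "0 \<le> 20 - 20 * r + 23 * r\<^sup>2"
  proof -
    have "0 \<le> 23 * (r - 10/23)\<^sup>2 + (20 - 100/23)" by simp
    also have "\<dots> = 20 - 20 * r + 23 * r\<^sup>2" by (simp add: algebra_simps power2_eq_square)
    finally show ?thesis .
  qed
  have "0 \<le> r * ((8 * y * r + (2 - r) * x)\<^sup>2 + (20 - 20 * r + 23 * r\<^sup>2) * x\<^sup>2)"
  proof -
    have "0 \<le> (8 * y * r + (2 - r) * x)\<^sup>2 + (20 - 20 * r + 23 * r\<^sup>2) * x\<^sup>2"
      by (rule add_nonneg_nonneg[OF zero_le_power2 mult_nonneg_nonneg[OF p zero_le_power2]])
    then show ?thesis using assms by simp
  qed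
  then have "0 \<le> 8 * (2 * x * y * (r\<^sup>2 * (2 - r)) + x\<^sup>2 * (4 * r - 3 * r\<^sup>2) + 8 * y\<^sup>2 * r^3 + 3 * x\<^sup>2 * r^3 - x\<^sup>2 * r)"
    by (simp only: id)
  then show ?thesis by simp
qed

lemma hardy1d:
  fixes f g :: "real \<Rightarrow> real"
  assumes der: "\<And>r. r \<in> {0..2} \<Longrightarrow> (f has_real_derivative g r) (at r within {0..2})"
    and cg: "continuous_on {0..2} g"
  shows "integral {0..2} (\<lambda>r. (f r)\<^sup>2 * r) \<le> 8 * integral {0..2} (\<lambda>r. (g r)\<^sup>2 * r^3) + 3 * integral {0..2} (\<lambda>r. (f r)\<^sup>2 * r^3)"
proof -
  have cf: "continuous_on {0..2} f"
    using der by (metis DERIV_continuous continuous_on_eq_continuous_within)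
  define F where "F r = (f r)\<^sup>2 * (r\<^sup>2 * (2 - r))" for r
  define F' where "F' r = 2 * f r * g r * (r\<^sup>2 * (2 - r)) + (f r)\<^sup>2 * (4 * r - 3 * r\<^sup>2)" for r
  have dF: "(F has_vector_derivative F' r) (at r within {0..2})" if "r \<in> {0..2}" for r
    unfolding has_real_derivative_iff_has_vector_derivative[symmetric] F_def F'_def
    by (rule derivative_eq_intros der[OF that] refl | simp)+ (simp add: algebra_simps power2_eq_square)
  have "(F' has_integral (F 2 - F 0)) {0..2}"
    by (rule fundamental_theorem_of_calculus) (use dF in auto)
  then have i0: "(F' has_integral 0) {0..2}" by (simp add: F_def)
  have c1: "continuous_on {0..2} (\<lambda>r. (f r)\<^sup>2 * r)" by (intro continuous_intros cf)
  have c2: "continuous_on {0..2} (\<lambda>r. (g r)\<^sup>2 * r^3)" by (intro continuous_intros cg)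
  have c3: "continuous_on {0..2} (\<lambda>r. (f r)\<^sup>2 * r^3)" by (intro continuous_intros cf)
  have i1: "((\<lambda>r. (f r)\<^sup>2 * r) has_integral integral {0..2} (\<lambda>r. (f r)\<^sup>2 * r)) {0..2}"
    using c1 integrable_continuous_interval by blast
  have i2: "((\<lambda>r. (g r)\<^sup>2 * r^3) has_integral integral {0..2} (\<lambda>r. (g r)\<^sup>2 * r^3)) {0..2}"
    using c2 integrable_continuous_interval by blast
  have i3: "((\<lambda>r. (f r)\<^sup>2 * r^3) has_integral integral {0..2} (\<lambda>r. (f r)\<^sup>2 * r^3)) {0..2}"
    using c3 integrable_continuous_interval by blast
  have isum: "((\<lambda>r. F' r + 8 * ((g r)\<^sup>2 * r^3) + 3 * ((f r)\<^sup>2 * r^3)) has_integral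
      (0 + 8 * integral {0..2} (\<lambda>r. (g r)\<^sup>2 * r^3) + 3 * integral {0..2} (\<lambda>r. (f r)\<^sup>2 * r^3))) {0..2}"
    by (intro has_integral_add has_integral_mult_right i0 i2 i3)
  have "integral {0..2} (\<lambda>r. (f r)\<^sup>2 * r) \<le> 0 + 8 * integral {0..2} (\<lambda>r. (g r)\<^sup>2 * r^3) + 3 * integral {0..2} (\<lambda>r. (f r)\<^sup>2 * r^3)"
    apply (rule has_integral_le[OF i1 isum])
    unfolding F'_def using quad_ineq[of _ "f _" "g _"] by (auto simp: algebra_simps)
  then show ?thesis by simp
qed

lemma exp_split: "exp (- ((r::real)\<^sup>2 + z\<^sup>2) / 4) = exp (- r\<^sup>2 / 4) * exp (- z\<^sup>2 / 4)"
  by (simp add: exp_add[symmetric] field_simps)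

lemma rho_star_alt: "rho_star (r, z) = 1 / (16 * sqrt pi) * exp (- z\<^sup>2 / 4) * (r * exp (- r\<^sup>2 / 4))"
  unfolding rho_star_def fst_conv snd_conv exp_split by simp

lemma mu_alt: "mu_weight (r, z) = 1 / (16 * sqrt pi) * exp (- z\<^sup>2 / 4) * (r^3 * exp (- r\<^sup>2 / 4))"
  unfolding mu_weight_def rho_star_alt by (simp add: power3_eq_cube power2_eq_square)

lemma fiber_meas:
  assumes "F \<in> borel_measurable borel"
  shows "(\<lambda>r::real. F (r, z::real)) \<in> borel_measurable borel"
proof -
  have "(\<lambda>r::real. (r, z)) \<in> borel_measurable borel"
    by (intro borel_measurable_continuous_onI continuous_intros)
  from measurable_compose[OF this assms] show ?thesis by (simp add: o_def)
qed

lemma fiber: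
  fixes \<psi> \<psi>r \<psi>z :: "real \<times> real \<Rightarrow> real" and z :: real
  assumes der: "\<forall>p\<in>Hclosed. (\<psi> has_derivative (\<lambda>v. \<psi>r p * fst v + \<psi>z p * snd v)) (at p within Hclosed)"
    and cr: "continuous_on Hclosed \<psi>r"
    and m1: "(\<lambda>p. indicator Hplane p *\<^sub>R ((\<psi> p)\<^sup>2 * rho_star p)) \<in> borel_measurable borel"
    and m2: "(\<lambda>p. indicator Hplane p *\<^sub>R ((\<psi> p)\<^sup>2 * mu_weight p)) \<in> borel_measurable borel"
    and m3: "(\<lambda>p. indicator Hplane p *\<^sub>R ((\<psi>r p)\<^sup>2 * mu_weight p)) \<in> borel_measurable borel"
  shows "(\<integral>\<^sup>+r. ennreal (indicator Hplane (r,z) *\<^sub>R ((\<psi> (r,z))\<^sup>2 * rho_star (r,z))) \<partial>lborel)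
     \<le> (\<integral>\<^sup>+r. ennreal ((3 * exp 1 + 1) * (indicator Hplane (r,z) *\<^sub>R ((\<psi> (r,z))\<^sup>2 * mu_weight (r,z)))
          + 8 * exp 1 * (indicator Hplane (r,z) *\<^sub>R ((\<psi>r (r,z))\<^sup>2 * mu_weight (r,z)))) \<partial>lborel)"
proof -
  define f where "f r = \<psi> (r, z)" for r
  define g where "g r = \<psi>r (r, z)" for r
  define c where "c = 1 / (16 * sqrt pi) * exp (- z\<^sup>2 / 4)"
  have c0: "0 \<le> c" unfolding c_def by simp
  define Fr where "Fr r = indicator Hplane (r,z) *\<^sub>R ((\<psi> (r,z))\<^sup>2 * rho_star (r,z))" for r
  define Fm where "Fm r = indicator Hplane (r,z) *\<^sub>R ((\<psi> (r,z))\<^sup>2 * mu_weight (r,z))" for r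
  define Gm where "Gm r = indicator Hplane (r,z) *\<^sub>R ((\<psi>r (r,z))\<^sup>2 * mu_weight (r,z))" for r
  have mFm: "Fm \<in> borel_measurable borel" unfolding Fm_def by (rule fiber_meas[OF m2])
  have mGm: "Gm \<in> borel_measurable borel" unfolding Gm_def by (rule fiber_meas[OF m3])
  have Hp: "(r, z) \<in> Hplane \<longleftrightarrow> 0 < r" for r by (simp add: Hplane_def)
  have Fm0: "0 \<le> Fm r" for r unfolding Fm_def mu_alt by (auto simp: Hp c_def indicator_def)
  have Gm0: "0 \<le> Gm r" for r unfolding Gm_def mu_alt by (auto simp: Hp c_def indicator_def)
  have derf: "(f has_real_derivative g r) (at r within {0..2})" if r: "r \<in> {0..2}" for r
  proof -
    have pin: "(r, z) \<in> Hclosed" using r by (simp add: Hclosed_def)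
    have d1: "((\<lambda>t. (t, z)) has_derivative (\<lambda>h. (h, 0))) (at r within {0..2})"
      by (rule derivative_eq_intros refl)+
    have sub: "(\<lambda>t. (t, z)) ` {0..2} \<subseteq> Hclosed" by (auto simp: Hclosed_def)
    have d2: "(\<psi> has_derivative (\<lambda>v. \<psi>r (r,z) * fst v + \<psi>z (r,z) * snd v)) (at (r, z) within (\<lambda>t. (t, z)) ` {0..2})"
      using der pin sub has_derivative_subset by blast
    have "((\<lambda>t. \<psi> (t, z)) has_derivative (\<lambda>h. \<psi>r (r,z) * fst (h, 0::real) + \<psi>z (r,z) * snd (h, 0::real))) (at r within {0..2})"
      using has_derivative_in_compose[OF d1 d2] by simp
    then show ?thesis
      unfolding has_field_derivative_def f_def g_def
      by (rule has_derivative_eq_rhs) (auto simp: fun_eq_iff)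
  qed
  have cg: "continuous_on {0..2} g"
  proof -
    have "continuous_on {0..2} (\<psi>r \<circ> (\<lambda>t. (t, z)))"
      by (rule continuous_on_compose) (auto intro!: continuous_intros continuous_on_subset[OF cr] simp: Hclosed_def)
    then show ?thesis by (simp add: g_def o_def)
  qed
  have cf: "continuous_on {0..2} f"
    using derf by (metis DERIV_continuous continuous_on_eq_continuous_within)
  have H: "integral {0..2} (\<lambda>r. (f r)\<^sup>2 * r) \<le> 8 * integral {0..2} (\<lambda>r. (g r)\<^sup>2 * r^3) + 3 * integral {0..2} (\<lambda>r. (f r)\<^sup>2 * r^3)"
    by (rule hardy1d[OF derf cg])
  define I1 where "I1 = integral {0..2} (\<lambda>r. (f r)\<^sup>2 * r)"
  define I2 where "I2 = integral {0..2} (\<lambda>r. (g r)\<^sup>2 * r^3)"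
  define I3 where "I3 = integral {0..2} (\<lambda>r. (f r)\<^sup>2 * r^3)"
  have i1: "((\<lambda>r. (f r)\<^sup>2 * r) has_integral I1) {0..2}" unfolding I1_def
    by (rule integrable_integral, rule integrable_continuous_interval) (intro continuous_intros cf)
  have i2: "((\<lambda>r. (g r)\<^sup>2 * r^3) has_integral I2) {0..2}" unfolding I2_def
    by (rule integrable_integral, rule integrable_continuous_interval) (intro continuous_intros cg)
  have i3: "((\<lambda>r. (f r)\<^sup>2 * r^3) has_integral I3) {0..2}" unfolding I3_def
    by (rule integrable_integral, rule integrable_continuous_interval) (intro continuous_intros cf)
  have e1: "(\<integral>\<^sup>+r. ennreal (c * ((f r)\<^sup>2 * r)) * indicator {0..2} r \<partial>lborel) = ennreal (c * I1)"
    by (rule nn_integral_has_integral_lebesgue') (use c0 in \<open>auto intro!: has_integral_mult_right i1\<close>)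
  have e2: "(\<integral>\<^sup>+r. ennreal (c * (8 * ((g r)\<^sup>2 * r^3) + 3 * ((f r)\<^sup>2 * r^3))) * indicator {0..2} r \<partial>lborel)
      = ennreal (c * (8 * I2 + 3 * I3))"
    by (rule nn_integral_has_integral_lebesgue') (use c0 in \<open>auto intro!: has_integral_mult_right has_integral_add i2 i3\<close>)
  have P1: "ennreal (Fr r) \<le> ennreal (c * ((f r)\<^sup>2 * r)) * indicator {0..2} r + ennreal (Fm r)" for r
  proof (cases "0 < r")
    case False then show ?thesis by (simp add: Fr_def Hp)
  next
    case True
    show ?thesis
    proof (cases "r \<le> 2")
      case True2: True
      have "Fr r = c * ((f r)\<^sup>2 * (r * exp (- r\<^sup>2 / 4)))" using True
        by (simp add: Fr_def Hp rho_star_alt c_def f_def)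
      also have "\<dots> \<le> c * ((f r)\<^sup>2 * r)"
        using True c0 by (intro mult_left_mono) auto
      finally have "Fr r \<le> c * ((f r)\<^sup>2 * r) + Fm r" using Fm0[of r] by linarith
      then have "ennreal (Fr r) \<le> ennreal (c * ((f r)\<^sup>2 * r) + Fm r)" by (rule ennreal_leI)
      also have "\<dots> = ennreal (c * ((f r)\<^sup>2 * r)) + ennreal (Fm r)"
        using Fm0[of r] c0 True by (intro ennreal_plus) auto
      finally show ?thesis using True True2 by simp
    next
      case False
      have "rho_star (r, z) \<le> mu_weight (r, z)"
      proof -
        have "0 \<le> rho_star (r, z)" unfolding rho_star_def using True by simp
        moreover have "1 \<le> r\<^sup>2" using False by (simp add: one_le_power)
        ultimately have "1 * rho_star (r, z) \<le> r\<^sup>2 * rho_star (r, z)" by (rule mult_right_mono[rotated])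
        then show ?thesis unfolding mu_weight_def by simp
      qed
      then have "Fr r \<le> Fm r" unfolding Fr_def Fm_def by (auto intro!: mult_left_mono simp: indicator_def)
      then show ?thesis using False by (simp add: ennreal_leI)
    qed
  qed
  have P2: "ennreal (c * (8 * ((g r)\<^sup>2 * r^3) + 3 * ((f r)\<^sup>2 * r^3))) * indicator {0..2} r
      \<le> ennreal (exp 1 * (8 * Gm r + 3 * Fm r))" for r
  proof (cases "0 < r \<and> r \<le> 2")
    case False
    show ?thesis
    proof (cases "r = 0")
      case True then show ?thesis by simp
    next
      case False
      with \<open>\<not> (0 < r \<and> r \<le> 2)\<close> have "r \<notin> {0..2}" by auto
      then show ?thesis by simp
    qed
  next
    case True
    have ex: "1 \<le> exp 1 * exp (- r\<^sup>2 / 4)"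
    proof -
      have "r\<^sup>2 \<le> 2\<^sup>2" using True by (intro power_mono) auto
      then have "0 \<le> 1 + - r\<^sup>2 / 4" by simp
      then have "1 \<le> exp (1 + - r\<^sup>2 / 4)" by (simp only: one_le_exp_iff)
      then show ?thesis by (simp only: exp_add)
    qed
    have "c * (8 * ((g r)\<^sup>2 * r^3) + 3 * ((f r)\<^sup>2 * r^3)) \<le>
        (exp 1 * exp (- r\<^sup>2 / 4)) * (c * (8 * ((g r)\<^sup>2 * r^3) + 3 * ((f r)\<^sup>2 * r^3)))"
    proof -
      have X0: "0 \<le> c * (8 * ((g r)\<^sup>2 * r^3) + 3 * ((f r)\<^sup>2 * r^3))"
        using True c0 by (intro mult_nonneg_nonneg add_nonneg_nonneg) auto
      from mult_right_mono[OF ex X0] show ?thesis by simp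
    qed
    also have "\<dots> = exp 1 * (8 * Gm r + 3 * Fm r)"
      using True by (simp add: Gm_def Fm_def Hp mu_alt c_def f_def g_def algebra_simps)
    finally show ?thesis using True by (simp add: ennreal_leI)
  qed
  have "(\<integral>\<^sup>+r. ennreal (Fr r) \<partial>lborel) \<le> (\<integral>\<^sup>+r. ennreal (c * ((f r)\<^sup>2 * r)) * indicator {0..2} r + ennreal (Fm r) \<partial>lborel)"
    by (intro nn_integral_mono P1)
  also have "\<dots> = (\<integral>\<^sup>+r. ennreal (c * ((f r)\<^sup>2 * r)) * indicator {0..2} r \<partial>lborel) + (\<integral>\<^sup>+r. ennreal (Fm r) \<partial>lborel)"
  proof (rule nn_integral_add)
    have "(\<lambda>r. indicator {0..2} r *\<^sub>R (c * ((f r)\<^sup>2 * r))) \<in> borel_measurable borel"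
      by (rule borel_measurable_continuous_on_indicator) (auto intro!: continuous_intros cf)
    then have "(\<lambda>r. ennreal (indicator {0..2} r *\<^sub>R (c * ((f r)\<^sup>2 * r)))) \<in> borel_measurable borel"
      by (rule measurable_compose[OF _ measurable_ennreal])
    also have "(\<lambda>r. ennreal (indicator {0..2} r *\<^sub>R (c * ((f r)\<^sup>2 * r)))) = (\<lambda>r. ennreal (c * ((f r)\<^sup>2 * r)) * indicator {0..2} r)"
      by (auto simp: fun_eq_iff indicator_def)
    finally show "(\<lambda>r. ennreal (c * ((f r)\<^sup>2 * r)) * indicator {0..2} r) \<in> borel_measurable lborel" by simp
    show "(\<lambda>r. ennreal (Fm r)) \<in> borel_measurable lborel" using mFm by simp
  qed
  also have "\<dots> \<le> ennreal (c * (8 * I2 + 3 * I3)) + (\<integral>\<^sup>+r. ennreal (Fm r) \<partial>lborel)"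
  proof -
    have "c * I1 \<le> c * (8 * I2 + 3 * I3)" using mult_left_mono[OF H c0] by (simp add: I1_def I2_def I3_def)
    then show ?thesis unfolding e1 by (intro add_right_mono ennreal_leI)
  qed
  also have "\<dots> = (\<integral>\<^sup>+r. ennreal (c * (8 * ((g r)\<^sup>2 * r^3) + 3 * ((f r)\<^sup>2 * r^3))) * indicator {0..2} r \<partial>lborel) + (\<integral>\<^sup>+r. ennreal (Fm r) \<partial>lborel)"
    unfolding e2 ..
  also have "\<dots> \<le> (\<integral>\<^sup>+r. ennreal (exp 1 * (8 * Gm r + 3 * Fm r)) \<partial>lborel) + (\<integral>\<^sup>+r. ennreal (Fm r) \<partial>lborel)"
    by (intro add_right_mono nn_integral_mono P2)
  also have "\<dots> = (\<integral>\<^sup>+r. ennreal (exp 1 * (8 * Gm r + 3 * Fm r)) + ennreal (Fm r) \<partial>lborel)"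
    by (rule nn_integral_add[symmetric]) (use mFm mGm in auto)
  also have "\<dots> = (\<integral>\<^sup>+r. ennreal ((3 * exp 1 + 1) * Fm r + 8 * exp 1 * Gm r) \<partial>lborel)"
    using Fm0 Gm0 by (intro nn_integral_cong) (simp add: ennreal_plus[symmetric] algebra_simps del: ennreal_plus)
  finally show ?thesis unfolding Fr_def Fm_def Gm_def .
qed

lemma tonelli_pair:
  fixes F :: "real \<times> real \<Rightarrow> ennreal"
  assumes "F \<in> borel_measurable borel"
  shows "(\<integral>\<^sup>+p. F p \<partial>lborel) = (\<integral>\<^sup>+z. (\<integral>\<^sup>+r. F (r, z) \<partial>lborel) \<partial>lborel)"
proof -
  have "F \<in> borel_measurable (lborel \<Otimes>\<^sub>M lborel)" using assms by (simp add: lborel_prod)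
  from lborel_pair.nn_integral_snd[OF this] show ?thesis by (simp add: lborel_prod)
qed

theorem lemmaA1:
  shows "\<exists>C::real. \<forall>(\<psi>::real \<times> real \<Rightarrow> real) (\<psi>r::real \<times> real \<Rightarrow> real) (\<psi>z::real \<times> real \<Rightarrow> real).
     (\<forall>p\<in>Hclosed. (\<psi> has_derivative (\<lambda>v. \<psi>r p * fst v + \<psi>z p * snd v)) (at p within Hclosed))
     \<and> continuous_on Hclosed \<psi>r \<and> continuous_on Hclosed \<psi>z
     \<and> memL2 mu_weight \<psi> \<and> memL2 mu_weight \<psi>r
     \<longrightarrow> memL2 rho_star \<psi> \<and>
         L2norm rho_star \<psi> \<le> C * (L2norm mu_weight \<psi> + L2norm mu_weight \<psi>r)"
proof (intro exI[of _ 5] allI impI)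
  fix \<psi> \<psi>r \<psi>z :: "real \<times> real \<Rightarrow> real"
  assume A: "(\<forall>p\<in>Hclosed. (\<psi> has_derivative (\<lambda>v. \<psi>r p * fst v + \<psi>z p * snd v)) (at p within Hclosed))
     \<and> continuous_on Hclosed \<psi>r \<and> continuous_on Hclosed \<psi>z
     \<and> memL2 mu_weight \<psi> \<and> memL2 mu_weight \<psi>r"
  then have der: "\<forall>p\<in>Hclosed. (\<psi> has_derivative (\<lambda>v. \<psi>r p * fst v + \<psi>z p * snd v)) (at p within Hclosed)"
    and cr: "continuous_on Hclosed \<psi>r" and L1: "memL2 mu_weight \<psi>" and L2: "memL2 mu_weight \<psi>r"
    by auto
  define Fr where "Fr p = indicator Hplane p *\<^sub>R ((\<psi> p)\<^sup>2 * rho_star p)" for p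
  define Fm where "Fm p = indicator Hplane p *\<^sub>R ((\<psi> p)\<^sup>2 * mu_weight p)" for p
  define Gm where "Gm p = indicator Hplane p *\<^sub>R ((\<psi>r p)\<^sup>2 * mu_weight p)" for p
  have cpsi: "continuous_on Hclosed \<psi>"
    unfolding continuous_on_eq_continuous_within
    using der has_derivative_continuous by blast
  have openH: "open Hplane" unfolding Hplane_def
    by (intro open_Collect_less continuous_intros)
  have HH: "Hplane \<subseteq> Hclosed" by (auto simp: Hplane_def Hclosed_def)
  have crho: "continuous_on Hplane rho_star" unfolding rho_star_def[abs_def] by (intro continuous_intros) auto
  have cmu: "continuous_on Hplane mu_weight" unfolding mu_weight_def[abs_def] by (intro continuous_intros crho)
  have m1: "Fr \<in> borel_measurable borel" unfolding Fr_def[abs_def]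
    by (rule borel_measurable_continuous_on_indicator) (use openH in \<open>auto intro!: continuous_intros crho continuous_on_subset[OF cpsi HH]\<close>)
  have m2: "Fm \<in> borel_measurable borel" unfolding Fm_def[abs_def]
    by (rule borel_measurable_continuous_on_indicator) (use openH in \<open>auto intro!: continuous_intros cmu continuous_on_subset[OF cpsi HH]\<close>)
  have m3: "Gm \<in> borel_measurable borel" unfolding Gm_def[abs_def]
    by (rule borel_measurable_continuous_on_indicator) (use openH in \<open>auto intro!: continuous_intros cmu continuous_on_subset[OF cr HH]\<close>)
  have rho0: "0 \<le> rho_star p" if "p \<in> Hplane" for p using that unfolding rho_star_def Hplane_def by simp
  have mu0: "0 \<le> mu_weight p" if "p \<in> Hplane" for p using rho0[OF that] unfolding mu_weight_def by simp
  have Fr0: "0 \<le> Fr p" for p unfolding Fr_def using rho0 by (auto simp: indicator_def)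
  have Fm0: "0 \<le> Fm p" for p unfolding Fm_def using mu0 by (auto simp: indicator_def)
  have Gm0: "0 \<le> Gm p" for p unfolding Gm_def using mu0 by (auto simp: indicator_def)
  have iFm: "integrable lborel Fm" using L1 unfolding memL2_def set_integrable_def Fm_def[abs_def] .
  have iGm: "integrable lborel Gm" using L2 unfolding memL2_def set_integrable_def Gm_def[abs_def] .
  define Im where "Im = integral\<^sup>L lborel Fm"
  define Ig where "Ig = integral\<^sup>L lborel Gm"
  have Im0: "0 \<le> Im" unfolding Im_def using Fm0 by simp
  have Ig0: "0 \<le> Ig" unfolding Ig_def using Gm0 by simp
  have nFm: "(\<integral>\<^sup>+p. ennreal (Fm p) \<partial>lborel) = ennreal Im"
    unfolding Im_def by (rule nn_integral_eq_integral[OF iFm]) (simp add: Fm0)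
  have nGm: "(\<integral>\<^sup>+p. ennreal (Gm p) \<partial>lborel) = ennreal Ig"
    unfolding Ig_def by (rule nn_integral_eq_integral[OF iGm]) (simp add: Gm0)
  define K1 where "K1 = 3 * exp 1 + (1::real)"
  define K2 where "K2 = 8 * exp (1::real)"
  have K10: "0 \<le> K1" and K20: "0 \<le> K2" unfolding K1_def K2_def by auto
  have "(\<integral>\<^sup>+p. ennreal (Fr p) \<partial>lborel) = (\<integral>\<^sup>+z. (\<integral>\<^sup>+r. ennreal (Fr (r, z)) \<partial>lborel) \<partial>lborel)"
    by (rule tonelli_pair) (use m1 in simp)
  also have "\<dots> \<le> (\<integral>\<^sup>+z. (\<integral>\<^sup>+r. ennreal (K1 * Fm (r, z) + K2 * Gm (r, z)) \<partial>lborel) \<partial>lborel)"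
    apply (rule nn_integral_mono)
    unfolding Fr_def Fm_def Gm_def K1_def K2_def
    by (rule fiber[OF der cr]) (use m1 m2 m3 in \<open>simp_all add: Fr_def[abs_def] Fm_def[abs_def] Gm_def[abs_def]\<close>)
  also have "\<dots> = (\<integral>\<^sup>+p. ennreal (K1 * Fm p + K2 * Gm p) \<partial>lborel)"
    by (rule tonelli_pair[symmetric]) (use m2 m3 in simp)
  also have "\<dots> = (\<integral>\<^sup>+p. ennreal K1 * ennreal (Fm p) + ennreal K2 * ennreal (Gm p) \<partial>lborel)"
  proof (intro nn_integral_cong)
    fix p
    have "ennreal (K1 * Fm p + K2 * Gm p) = ennreal (K1 * Fm p) + ennreal (K2 * Gm p)"
      using K10 K20 Fm0[of p] Gm0[of p] by (intro ennreal_plus) auto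
    also have "\<dots> = ennreal K1 * ennreal (Fm p) + ennreal K2 * ennreal (Gm p)"
      using K10 K20 Fm0[of p] Gm0[of p] by (simp add: ennreal_mult)
    finally show "ennreal (K1 * Fm p + K2 * Gm p) = ennreal K1 * ennreal (Fm p) + ennreal K2 * ennreal (Gm p)" .
  qed
  also have "\<dots> = ennreal K1 * (\<integral>\<^sup>+p. ennreal (Fm p) \<partial>lborel) + ennreal K2 * (\<integral>\<^sup>+p. ennreal (Gm p) \<partial>lborel)"
    using m2 m3 by (simp add: nn_integral_add nn_integral_cmult)
  also have "\<dots> = ennreal (K1 * Im + K2 * Ig)"
    unfolding nFm nGm using K10 K20 Im0 Ig0
    by (simp add: ennreal_mult[symmetric] ennreal_plus[symmetric] del: ennreal_plus)
  finally have bound: "(\<integral>\<^sup>+p. ennreal (Fr p) \<partial>lborel) \<le> ennreal (K1 * Im + K2 * Ig)" .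
  have iFr: "integrable lborel Fr"
  proof (rule integrableI_bounded)
    show "Fr \<in> borel_measurable lborel" using m1 by simp
    have "(\<integral>\<^sup>+p. ennreal (norm (Fr p)) \<partial>lborel) = (\<integral>\<^sup>+p. ennreal (Fr p) \<partial>lborel)"
      using Fr0 by simp
    also have "\<dots> < \<infinity>" using bound by (simp add: le_less_trans)
    finally show "(\<integral>\<^sup>+p. ennreal (norm (Fr p)) \<partial>lborel) < \<infinity>" .
  qed
  define Ir where "Ir = integral\<^sup>L lborel Fr"
  have "ennreal Ir = (\<integral>\<^sup>+p. ennreal (Fr p) \<partial>lborel)"
    unfolding Ir_def by (rule nn_integral_eq_integral[OF iFr, symmetric]) (simp add: Fr0)
  with bound have "ennreal Ir \<le> ennreal (K1 * Im + K2 * Ig)" by simp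
  then have IrB: "Ir \<le> K1 * Im + K2 * Ig"
    using K10 K20 Im0 Ig0 by (subst (asm) ennreal_le_iff) auto
  have e3: "exp (1::real) \<le> 3" by (rule exp_le)
  have "K1 * Im + K2 * Ig \<le> 25 * Im + 25 * Ig"
    using e3 Im0 Ig0 unfolding K1_def K2_def by (intro add_mono mult_right_mono) auto
  with IrB have IrB': "Ir \<le> 25 * (Im + Ig)" by simp
  have s25: "sqrt 25 = (5::real)" using real_sqrt_abs[of "5::real"] by simp
  have "L2norm rho_star \<psi> = sqrt Ir"
    unfolding L2norm_def Ir_def Fr_def[abs_def] set_lebesgue_integral_def ..
  also have "\<dots> \<le> sqrt (25 * (Im + Ig))" using IrB' by simp
  also have "\<dots> = 5 * sqrt (Im + Ig)" using real_sqrt_mult[of 25 "Im + Ig"] s25 by simp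
  also have "\<dots> \<le> 5 * (sqrt Im + sqrt Ig)" using sqrt_add_le_add_sqrt[OF Im0 Ig0] by simp
  also have "sqrt Im = L2norm mu_weight \<psi>"
    unfolding L2norm_def Im_def Fm_def[abs_def] set_lebesgue_integral_def ..
  also have "sqrt Ig = L2norm mu_weight \<psi>r"
    unfolding L2norm_def Ig_def Gm_def[abs_def] set_lebesgue_integral_def ..
  finally have N: "L2norm rho_star \<psi> \<le> 5 * (L2norm mu_weight \<psi> + L2norm mu_weight \<psi>r)" .
  have "memL2 rho_star \<psi>"
    using iFr unfolding memL2_def set_integrable_def Fr_def[abs_def] .
  with N show "memL2 rho_star \<psi> \<and> L2norm rho_star \<psi> \<le> 5 * (L2norm mu_weight \<psi> + L2norm mu_weight \<psi>r)" by simp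
qed

end
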